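(* Let $q\in\mathbb{C}$, $|q|<1$, $\ell\in\mathbb{N}$, $\alpha_j,\beta_j\in\mathbb{N}$ for $j=1,\dots,\ell$. For $k\ge1$ and a tuple $\mathbf{r}=(r_1,\dots,r_m)\in\mathbb{Z}_{\ge0}^m$ define $$\Psi_k(\mathbf{r})=(-1)^k\Big(\sum_{j=2}^k(-1)^j\,\mathfrak{z}_q^{(j-1,r_1,\dots,r_m)}[j,r_1,\dots,r_m]-\mathfrak{z}_q^{(1,r_1,\dots,r_m)}[1,r_1,\dots,r_m]\Big).$$ Then $$\Psi_{\alpha_1}(0^{\beta_1-1},\alpha_2,0^{\beta_2-1},\dots,\alpha_\ell,0^{\beta_\ell-1})=\Psi_{\beta_\ell}(0^{\alpha_\ell-1},\beta_{\ell-1},0^{\alpha_{\ell-1}-1},\dots,\beta_1,0^{\alpha_1-1}),$$ where $0^n$ denotes $n$ consecutive zeros. (In the paper's word notation: $\zeta^{\widetilde{\mathrm{IV}}}[\varphi_{\alpha_1}y^{\beta_1-1}\rho^{\alpha_2}y^{\beta_2}\cdots\rho^{\alpha_\ell}y^{\beta_\ell}]=\zeta^{\widetilde{\mathrm{IV}}}[\varphi_{\beta_\ell}y^{\alpha_\ell-1}\rho^{\beta_{\ell-1}}y^{\alpha_{\ell-1}}\cdots\rho^{\beta_1}y^{\alpha_1}]$ with $\varphi_k=(-1)^k(\sum_{j=2}^k(-1)^jz_j-\theta)$.)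
   Context: $\mathfrak{z}_q^{\mathbf{t}}[\mathbf{s}]=\sum_{k_1>\dots>k_d>0}\prod_j\frac{q^{k_jt_j}}{(1-q^{k_j})^{s_j}}$. The values $\mathfrak{z}_q^{(j-1,\mathbf{r})}[j,\mathbf{r}]$ ($j\ge2$) are type IV values and $\mathfrak{z}_q^{(1,\mathbf{r})}[1,\mathbf{r}]$ the regularizing type II values; in word form $z_j=\rho^{j-1}\pi y$, $\theta=\rho y$, with a type-$\widetilde{\mathrm{IV}}$ word $z_j\rho^{r_1}y\cdots\rho^{r_m}y$ (resp. $\theta\rho^{r_1}y\cdots\rho^{r_m}y$) realized as $\mathfrak{z}_q^{(j-1,\mathbf{r})}[j,\mathbf{r}]$ (resp. $\mathfrak{z}_q^{(1,\mathbf{r})}[1,\mathbf{r}]$). For $k=1$ the sum over $j$ is empty. *)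

theory Defs
  imports "HOL-Analysis.Analysis"
begin

definition qzeta :: "complex \<Rightarrow> nat list \<Rightarrow> nat list \<Rightarrow> complex" where
  "qzeta q t s =
     infsum (\<lambda>ks. \<Prod>j<length s. q ^ (ks ! j * t ! j) / (1 - q ^ (ks ! j)) ^ (s ! j))
       {ks :: nat list. length ks = length s \<and> sorted_wrt (>) ks \<and> (\<forall>k\<in>set ks. 0 < k)}"

definition Psi :: "complex \<Rightarrow> nat \<Rightarrow> nat list \<Rightarrow> complex" where
  "Psi q k r = (-1) ^ k *
     ((\<Sum>j\<in>{2..k}. (-1) ^ j * qzeta q ((j - 1) # r) (j # r)) - qzeta q (1 # r) (1 # r))"

end

theory Submission
  imports Defs
begin

definition u :: "'a::{real_normed_field,banach} \<Rightarrow> nat \<Rightarrow> 'a" where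
  "u q k = q ^ k / (1 - q ^ k)"

definition Pos :: "nat \<Rightarrow> nat list set" where
  "Pos n = {y. length y = n \<and> (\<forall>v\<in>set y. 0 < v)}"

lemma Pos_Suc_bij:
  "bij_betw (\<lambda>(v,y). v # y) ({1..} \<times> Pos n) (Pos (Suc n))"
  by (rule bij_betwI[where g="\<lambda>z. (hd z, tl z)"])
     (auto simp: Pos_def Suc_le_eq length_Suc_conv)

lemma Exp_step:
  fixes q :: "'a::{real_normed_field,banach}"
  assumes q: "norm q < 1" and k: "1 \<le> k"
    and IH: "((\<lambda>y. q ^ (k * sum_list y)) has_sum (u q k) ^ n) (Pos n)"
    and S: "(\<lambda>(v,y). q ^ (k * sum_list (v # y))) summable_on ({1..} \<times> Pos n)"
  shows "((\<lambda>y. q ^ (k * sum_list y)) has_sum (u q k) ^ Suc n) (Pos (Suc n))"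
proof -
  have nq: "norm (q ^ k) < 1"
    using q k by (simp add: norm_power power_less_one_iff)
  have J: "((\<lambda>(v,y). q ^ (k * sum_list (v # y))) has_sum (u q k) ^ Suc n) (Sigma {1..} (\<lambda>_. Pos n))"
  proof (rule has_sum_SigmaI)
    fix v :: nat assume "v \<in> {1..}"
    have "((\<lambda>y. (q ^ k) ^ v * q ^ (k * sum_list y)) has_sum (q ^ k) ^ v * (u q k) ^ n) (Pos n)"
      by (rule has_sum_cmult_right[OF IH])
    then show "((\<lambda>y. (\<lambda>(v,y). q ^ (k * sum_list (v # y))) (v, y)) has_sum (q ^ k) ^ v * (u q k) ^ n) (Pos n)"
      by (simp add: power_add power_mult[symmetric] algebra_simps)
  next
    have "((\<lambda>v. (q ^ k) ^ v * (u q k) ^ n) has_sum (q ^ k / (1 - q ^ k)) * (u q k) ^ n) {1..}"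
      by (rule has_sum_cmult_left[OF has_sum_geometric_from_1[OF nq]])
    then show "((\<lambda>v. (q ^ k) ^ v * (u q k) ^ n) has_sum (u q k) ^ Suc n) {1..}"
      by (simp add: u_def)
  next
    show "(\<lambda>(v,y). q ^ (k * sum_list (v # y))) summable_on Sigma {1..} (\<lambda>_. Pos n)"
      using S by simp
  qed
  show ?thesis
    using J has_sum_reindex_bij_betw[OF Pos_Suc_bij, of "\<lambda>y. q ^ (k * sum_list y)"]
    by (simp add: case_prod_unfold)
qed

lemma Pos_0: "Pos 0 = {[]}" by (auto simp: Pos_def)

lemma Exp_real:
  fixes r :: real
  assumes r0: "0 \<le> r" and r1: "r < 1" and k: "1 \<le> k"
  shows "((\<lambda>y. r ^ (k * sum_list y)) has_sum (u r k) ^ n) (Pos n)"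
proof (induction n)
  case 0
  then show ?case by (simp add: Pos_0 has_sum_finiteI)
next
  case (Suc n)
  have nq: "norm (r ^ k) < 1"
    using r0 r1 k by (simp add: norm_power power_less_one_iff)
  show ?case
  proof (rule Exp_step[OF _ k Suc])
    show "norm r < 1" using r0 r1 by simp
    show "(\<lambda>(v,y). r ^ (k * sum_list (v # y))) summable_on ({1..} \<times> Pos n)"
    proof (rule summable_on_SigmaI)
      fix v :: nat assume "v \<in> {1..}"
      have "((\<lambda>y. (r ^ k) ^ v * r ^ (k * sum_list y)) has_sum (r ^ k) ^ v * (u r k) ^ n) (Pos n)"
        by (rule has_sum_cmult_right[OF Suc])
      then show "((\<lambda>y. (\<lambda>(v,y). r ^ (k * sum_list (v # y))) (v, y)) has_sum (r ^ k) ^ v * (u r k) ^ n) (Pos n)"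
        by (simp add: power_add power_mult[symmetric] algebra_simps)
    next
      have "((\<lambda>v. (r ^ k) ^ v * (u r k) ^ n) has_sum (r ^ k / (1 - r ^ k)) * (u r k) ^ n) {1..}"
        by (rule has_sum_cmult_left[OF has_sum_geometric_from_1[OF nq]])
      then show "(\<lambda>v. (r ^ k) ^ v * (u r k) ^ n) summable_on {1..}"
        using has_sum_imp_summable by blast
    next
      fix v y show "0 \<le> (\<lambda>(v,y). r ^ (k * sum_list (v # y))) (v, y)" using r0 by simp
    qed
  qed
qed

lemma Exp:
  fixes q :: "'a::{real_normed_field,banach}"
  assumes q: "norm q < 1" and k: "1 \<le> k"
  shows "((\<lambda>y. q ^ (k * sum_list y)) has_sum (u q k) ^ n) (Pos n)"
proof (induction n)
  case 0
  then show ?case by (simp add: Pos_0 has_sum_finiteI)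
next
  case (Suc n)
  show ?case
  proof (rule Exp_step[OF q k Suc])
    have "(\<lambda>y. norm q ^ (k * sum_list y)) summable_on Pos (Suc n)"
      using Exp_real[of "norm q" k "Suc n"] q k has_sum_imp_summable by auto
    then have "(\<lambda>(v,y). norm q ^ (k * sum_list (v # y))) summable_on ({1..} \<times> Pos n)"
      using summable_on_reindex_bij_betw[OF Pos_Suc_bij, of "\<lambda>y. norm q ^ (k * sum_list y)"]
      by (simp add: case_prod_unfold)
    then have "(\<lambda>p. norm ((\<lambda>(v,y). q ^ (k * sum_list (v # y))) p)) summable_on ({1..} \<times> Pos n)"
      by (simp add: case_prod_unfold norm_power)
    then show "(\<lambda>(v,y). q ^ (k * sum_list (v # y))) summable_on ({1..} \<times> Pos n)"
      by (rule abs_summable_summable)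
  qed
qed

definition Dc :: "nat \<Rightarrow> nat \<Rightarrow> nat list set" where
  "Dc c n = {ks. length ks = n \<and> sorted_wrt (>) ks \<and> (\<forall>k\<in>set ks. c < k)}"

definition Zp :: "'a::{real_normed_field,banach} \<Rightarrow> nat list \<Rightarrow> nat list \<Rightarrow> 'a" where
  "Zp q s ks = (\<Prod>i<length s. u q (ks ! i) ^ (s ! i))"

lemma Dc_sub_Pos: "Dc c n \<subseteq> Pos n" by (auto simp: Dc_def Pos_def)

lemma sum_list_le_len: "(\<forall>x\<in>set xs. x \<le> M) \<Longrightarrow> sum_list xs \<le> length xs * (M::nat)"
  by (induction xs) auto

lemma norm_u_le:
  fixes q :: "'a::{real_normed_field,banach}"
  assumes q: "norm q < 1" and k: "1 \<le> k"
  shows "norm (u q k) \<le> norm q ^ k / (1 - norm q)"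
proof -
  have a: "norm q ^ k \<le> norm q"
    using power_decreasing[of 1 k "norm q"] q k by simp
  have b: "1 - norm q \<le> norm (1 - q ^ k)"
  proof -
    have "1 - norm (q ^ k) \<le> norm (1 - q ^ k)"
      by (metis norm_one norm_triangle_ineq2)
    then show ?thesis using a by (simp add: norm_power)
  qed
  have c: "0 < 1 - norm q" using q by simp
  show ?thesis unfolding u_def norm_divide norm_power
    by (rule frac_le) (use b c in auto)
qed

lemma Zsum:
  fixes q :: "'a::{real_normed_field,banach}"
  assumes q: "norm q < 1" and s: "s \<noteq> []" "1 \<le> hd s"
  shows "Zp q s summable_on Dc c (length s)"
proof -
  obtain s0 s' where ss: "s = s0 # s'" using s by (cases s) auto
  have s0: "1 \<le> s0" using s ss by simp
  then obtain t where t: "s0 = Suc t" by (cases s0) auto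
  define n where "n = length s"
  have n: "0 < n" using ss n_def by simp
  define r where "r = norm q"
  define C where "C = 1 / (1 - r)"
  define \<rho> where "\<rho> = (1 + r) / 2"
  define \<sigma> where "\<sigma> = \<rho> powr (1 / real n)"
  have r0: "0 \<le> r" "r < 1" using q r_def by auto
  have C1: "1 \<le> C" using r0 by (simp add: C_def)
  have \<rho>: "0 < \<rho>" "\<rho> < 1" "r \<le> \<rho>" using r0 by (auto simp: \<rho>_def)
  have \<sigma>0: "0 < \<sigma>" using \<rho> by (simp add: \<sigma>_def)
  have \<sigma>1: "\<sigma> < 1"
  proof -
    have "ln \<rho> < 0" using \<rho> by (intro ln_less_zero) auto
    then have "1 / real n * ln \<rho> < 0" using n by (intro mult_pos_neg) auto
    then show ?thesis using \<rho> by (simp add: \<sigma>_def powr_def)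
  qed
  have uC: "norm (u q k) \<le> C * r ^ k" if "1 \<le> k" for k
    using norm_u_le[OF q that] by (simp add: C_def r_def)
  have uC': "norm (u q k) \<le> C" if "1 \<le> k" for k
  proof -
    have "C * r ^ k \<le> C * 1" using C1 r0 by (intro mult_left_mono power_le_one) auto
    then show ?thesis using uC[OF that] by simp
  qed
  have "(\<lambda>y. \<sigma> ^ (1 * sum_list y)) summable_on Pos n"
    using Exp_real[of \<sigma> 1 n] \<sigma>0 \<sigma>1 has_sum_imp_summable by auto
  then have "(\<lambda>y. C ^ sum_list s * \<sigma> ^ (sum_list y)) summable_on Pos n"
    by (intro summable_on_cmult_right) simp
  then have gs: "(\<lambda>y. C ^ sum_list s * \<sigma> ^ (sum_list y)) summable_on Dc c n"
    by (rule summable_on_subset[OF _ Dc_sub_Pos])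
  have bound: "norm (Zp q s ks) \<le> C ^ sum_list s * \<sigma> ^ (sum_list ks)" if ks: "ks \<in> Dc c n" for ks
  proof -
    obtain k0 ks' where kk: "ks = k0 # ks'" using ks n by (cases ks) (auto simp: Dc_def)
    have len: "length ks' = length s'" using ks kk ss by (simp add: Dc_def n_def)
    have pos: "\<forall>k\<in>set ks. 1 \<le> k" using ks by (auto simp: Dc_def)
    have le0: "\<forall>k\<in>set ks. k \<le> k0" using ks kk by (auto simp: Dc_def)
    have k0: "1 \<le> k0" using pos kk by simp
    have eq: "norm (Zp q s ks) = norm (u q k0) ^ s0 * (\<Prod>i<length s'. norm (u q (ks'!i)) ^ (s'!i))"
      unfolding Zp_def ss kk length_Cons prod.lessThan_Suc_shift
      by (simp add: norm_mult prod_norm[symmetric] norm_power)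
    have p1: "(\<Prod>i<length s'. norm (u q (ks'!i)) ^ (s'!i)) \<le> (\<Prod>i<length s'. C ^ (s'!i))"
    proof (rule prod_mono)
      fix i assume "i \<in> {..<length s'}"
      then have "ks' ! i \<in> set ks'" using len by simp
      then have "1 \<le> ks' ! i" using pos kk by simp
      then have "norm (u q (ks'!i)) \<le> C" by (rule uC')
      then show "0 \<le> norm (u q (ks'!i)) ^ (s'!i) \<and> norm (u q (ks'!i)) ^ (s'!i) \<le> C ^ (s'!i)"
        by (auto intro: power_mono)
    qed
    have p2: "(\<Prod>i<length s'. C ^ (s'!i)) = C ^ sum_list s'"
      by (simp add: power_sum sum_list_sum_nth atLeast0LessThan)
    have p3: "norm (u q k0) ^ s0 \<le> C * r ^ k0 * C ^ (s0 - 1)"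
    proof -
      have "norm (u q k0) ^ s0 = norm (u q k0) * norm (u q k0) ^ (s0 - 1)"
        by (simp add: t)
      also have "\<dots> \<le> C * r ^ k0 * C ^ (s0 - 1)"
        using uC[OF k0] uC'[OF k0] C1 r0 by (intro mult_mono power_mono) auto
      finally show ?thesis .
    qed
    have "norm (Zp q s ks) \<le> C * r ^ k0 * C ^ (s0 - 1) * C ^ sum_list s'"
      unfolding eq p2[symmetric] using p1 p3 C1 r0
      by (intro mult_mono) (auto intro!: prod_nonneg)
    also have "\<dots> = C ^ sum_list s * r ^ k0"
      by (simp add: ss t power_add algebra_simps)
    also have "\<dots> \<le> C ^ sum_list s * \<rho> ^ k0"
      using C1 r0 \<rho> by (intro mult_left_mono power_mono) auto
    also have "\<rho> ^ k0 \<le> \<sigma> ^ sum_list ks"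
    proof -
      have sl: "sum_list ks \<le> n * k0" using sum_list_le_len[of ks k0] le0 ks by (simp add: Dc_def)
      have "\<sigma> ^ sum_list ks = \<rho> powr (real (sum_list ks) * (1 / real n))"
        using \<rho> by (simp add: \<sigma>_def powr_power)
      also have "\<dots> \<ge> \<rho> powr (real k0)"
      proof (rule powr_mono')
        have "real (sum_list ks) \<le> real n * real k0" using sl by (metis of_nat_le_iff of_nat_mult)
        then show "real (sum_list ks) * (1 / real n) \<le> real k0" using n
          by (simp add: field_simps)
      qed (use \<rho> in auto)
      finally show ?thesis using \<rho> by (simp add: powr_realpow)
    qed
    finally show ?thesis using C1 by simp
  qed
  show ?thesis unfolding n_def[symmetric]
    by (rule abs_summable_summable, rule Infinite_Sum.abs_summable_on_comparison_test'[OF gs bound])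
qed

definition SAp :: "(bool \<times> nat) list \<Rightarrow> nat" where
  "SAp z = sum_list (map (\<lambda>(b,v). if b then v else 0) z)"
definition SNp :: "(bool \<times> nat) list \<Rightarrow> nat" where
  "SNp z = sum_list (map (\<lambda>(b,v). if b then 0 else v) z)"

fun Ep :: "(bool \<times> nat) list \<Rightarrow> nat" where
  "Ep [] = 0"
| "Ep ((b,v) # z) = (if b then 0 else v * SAp z) + Ep z"

definition Cfg :: "bool list \<Rightarrow> (bool \<times> nat) list set" where
  "Cfg w = {z. map fst z = w \<and> (\<forall>p\<in>set z. 0 < snd p)}"

definition Gterm :: "'a::{real_normed_field,banach} \<Rightarrow> nat \<Rightarrow> (bool \<times> nat) list \<Rightarrow> 'a" where
  "Gterm q c z = q ^ (Ep z + c * SNp z)"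

definition Gt :: "'a::{real_normed_field,banach} \<Rightarrow> bool list \<Rightarrow> nat \<Rightarrow> 'a" where
  "Gt q w c = infsum (Gterm q c) (Cfg w)"

definition word :: "nat list \<Rightarrow> bool list" where
  "word s = concat (map (\<lambda>x. replicate x False @ [True]) s)"

lemma SAp_simps[simp]: "SAp [] = 0" "SAp ((b,v)#z) = (if b then v else 0) + SAp z"
  "SAp (z1 @ z2) = SAp z1 + SAp z2"
  by (auto simp: SAp_def)
lemma SNp_simps[simp]: "SNp [] = 0" "SNp ((b,v)#z) = (if b then 0 else v) + SNp z"
  "SNp (z1 @ z2) = SNp z1 + SNp z2"
  by (auto simp: SNp_def)

lemma Ep_append: "Ep (z1 @ z2) = Ep z1 + Ep z2 + SNp z1 * SAp z2"
  by (induction z1 rule: Ep.induct) (auto simp: algebra_simps)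

lemma SAp_N[simp]: "SAp (map (Pair False) y) = 0" by (induction y) auto
lemma SNp_N[simp]: "SNp (map (Pair False) y) = sum_list y" by (induction y) auto
lemma Ep_N[simp]: "Ep (map (Pair False) y) = 0" by (induction y) auto

lemma Gterm_split:
  "Gterm q c (zw @ map (Pair False) yn @ [(True,a)]) = Gterm q (c+a) zw * q ^ ((c+a) * sum_list yn)"
  by (simp add: Gterm_def Ep_append power_add[symmetric] algebra_simps)

lemma word_snoc[simp]: "word (s @ [x]) = word s @ replicate x False @ [True]"
  by (simp add: word_def)

lemma Zp_snoc: "length ks = length s \<Longrightarrow> Zp q (s @ [x]) (ks @ [k]) = Zp q s ks * u q k ^ x"
  by (simp add: Zp_def nth_append)

lemma B1: "bij_betw (\<lambda>(k,ks). ks @ [k]) (Sigma {c<..} (\<lambda>k. Dc k n)) (Dc c (Suc n))"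
proof (rule bij_betwI[where g="\<lambda>ks. (last ks, butlast ks)"])
  show "(\<lambda>(k,ks). ks @ [k]) \<in> Sigma {c<..} (\<lambda>k. Dc k n) \<rightarrow> Dc c (Suc n)"
    by (auto simp: Dc_def sorted_wrt_append intro: less_trans)
  show "(\<lambda>ks. (last ks, butlast ks)) \<in> Dc c (Suc n) \<rightarrow> Sigma {c<..} (\<lambda>k. Dc k n)"
  proof
    fix ks assume ks: "ks \<in> Dc c (Suc n)"
    then have ne: "ks \<noteq> []" by (auto simp: Dc_def)
    then have e: "ks = butlast ks @ [last ks]" by simp
    have h: "sorted_wrt (>) (butlast ks @ [last ks])" using ks e by (simp add: Dc_def)
    have h2: "\<forall>k\<in>set (butlast ks @ [last ks]). c < k" using ks e by (simp add: Dc_def)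
    have h3: "sorted_wrt (>) (butlast ks)" "\<forall>x\<in>set (butlast ks). last ks < x"
      using h[unfolded sorted_wrt_append] by auto
    have h4: "c < last ks" using h2 by simp
    show "(last ks, butlast ks) \<in> Sigma {c<..} (\<lambda>k. Dc k n)"
      using ks h3 h4 by (simp add: Dc_def)
  qed
  show "(\<lambda>(k,ks). ks @ [k]) (last y, butlast y) = y" if "y \<in> Dc c (Suc n)" for y
  proof -
    have "y \<noteq> []" using that by (auto simp: Dc_def)
    then show ?thesis by simp
  qed
qed auto

lemma map_PairF: "map fst z = replicate n False \<Longrightarrow> map (Pair False) (map snd z) = z"
  by (induction z arbitrary: n) (auto simp: Cons_replicate_eq)

lemma B2: "bij_betw (\<lambda>(a,(zw,yn)). zw @ map (Pair False) yn @ [(True,a)])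
   ({1..} \<times> (Cfg w \<times> Pos x)) (Cfg (w @ replicate x False @ [True]))"
proof (rule bij_betwI[where g="\<lambda>z. (snd (last z), (take (length w) z, map snd (take x (drop (length w) z))))"])
  show "(\<lambda>(a,(zw,yn)). zw @ map (Pair False) yn @ [(True,a)]) \<in> {1..} \<times> (Cfg w \<times> Pos x) \<rightarrow> Cfg (w @ replicate x False @ [True])"
    by (fastforce simp: Cfg_def Pos_def comp_def map_replicate_const)
  show "(\<lambda>z. (snd (last z), (take (length w) z, map snd (take x (drop (length w) z))))) \<in> Cfg (w @ replicate x False @ [True]) \<rightarrow> {1..} \<times> (Cfg w \<times> Pos x)"
  proof
    fix z assume z: "z \<in> Cfg (w @ replicate x False @ [True])"
    then have m: "map fst z = w @ replicate x False @ [True]" and p: "\<forall>p\<in>set z. 0 < snd p" by (auto simp: Cfg_def)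
    have ne: "z \<noteq> []" using m by auto
    have lz: "length z = length w + x + 1" using arg_cong[OF m, of length] by simp
    have "map fst (take (length w) z) = w" using m by (simp add: take_map[symmetric])
    moreover have "length (take x (drop (length w) z)) = x" using lz by simp
    moreover have "last z \<in> set z" using ne by simp
    ultimately show "(snd (last z), (take (length w) z, map snd (take x (drop (length w) z)))) \<in> {1..} \<times> (Cfg w \<times> Pos x)"
      using p by (auto simp: Cfg_def Pos_def Suc_le_eq dest: in_set_takeD in_set_dropD)
  qed
  show "(\<lambda>z. (snd (last z), (take (length w) z, map snd (take x (drop (length w) z)))))
          ((\<lambda>(a,(zw,yn)). zw @ map (Pair False) yn @ [(True,a)]) p) = p" if "p \<in> {1..} \<times> (Cfg w \<times> Pos x)" for p
    using that by (auto simp: Cfg_def Pos_def comp_def)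
  show "(\<lambda>(a,(zw,yn)). zw @ map (Pair False) yn @ [(True,a)]) ((\<lambda>z. (snd (last z), (take (length w) z, map snd (take x (drop (length w) z))))) z) = z"
    if "z \<in> Cfg (w @ replicate x False @ [True])" for z
  proof -
    have m: "map fst z = w @ replicate x False @ [True]" using that by (simp add: Cfg_def)
    then obtain z1 z23 where z: "z = z1 @ z23" "w = map fst z1" "replicate x False @ [True] = map fst z23"
      unfolding map_eq_append_conv by blast
    then obtain z2 z3 where z': "z23 = z2 @ z3" "replicate x False = map fst z2" "[True] = map fst z3"
      unfolding map_eq_append_conv[of fst z23, symmetric] by (metis map_eq_append_conv)
    obtain v where z3: "z3 = [(True, v)]" using z'(3) by (cases z3) auto
    have l1: "length z1 = length w" using z(2) by simp
    have l2: "length z2 = x" using arg_cong[OF z'(2), of length] by simp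
    have zz: "z = z1 @ z2 @ [(True,v)]" using z(1) z'(1) z3 by simp
    have mp: "map (Pair False) (map snd z2) = z2" using map_PairF[OF z'(2)[symmetric]] .
    have e1: "take (length w) z = z1" using zz l1 by simp
    have e2: "take x (drop (length w) z) = z2" using zz l1 l2 by simp
    have e3: "last z = (True, v)" using zz by simp
    have mp': "map (Pair False \<circ> snd) z2 = z2" using mp by (simp only: map_map)
    show ?thesis unfolding e1 e2 e3 by (simp add: mp' zz)
  qed
qed

lemma bij_shift: "bij_betw (\<lambda>a. c + a) {1::nat..} {c<..}"
  by (rule bij_betwI[where g="\<lambda>k. k - c"]) auto

lemma Zside:
  fixes q :: "'a::{real_normed_field,banach}"
  assumes q: "norm q < 1"
    and IH: "\<And>k. (Zp q s has_sum Gt q (word s) k) (Dc k (length s))"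
    and P: "1 \<le> hd (s @ [x])"
  shows "((\<lambda>a. Gt q (word s) (c+a) * u q (c+a) ^ x) has_sum infsum (Zp q (s@[x])) (Dc c (Suc (length s)))) {1..}"
    and "Zp q (s@[x]) summable_on Dc c (Suc (length s))"
proof -
  define n where "n = length s"
  define T where "T = infsum (Zp q (s@[x])) (Dc c (Suc n))"
  have ZS: "Zp q (s@[x]) summable_on Dc c (Suc n)"
    using Zsum[OF q _ P, of c] by (simp add: n_def)
  then show "Zp q (s@[x]) summable_on Dc c (Suc (length s))" by (simp add: n_def)
  have H: "(Zp q (s@[x]) has_sum T) (Dc c (Suc n))" using ZS by (simp add: T_def)
  have JH: "((\<lambda>(k,ks). Zp q s ks * u q k ^ x) has_sum T) (Sigma {c<..} (\<lambda>k. Dc k n))"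
  proof -
    have "((\<lambda>p. Zp q (s@[x]) ((\<lambda>(k,ks). ks @ [k]) p)) has_sum T) (Sigma {c<..} (\<lambda>k. Dc k n))"
      using has_sum_reindex_bij_betw[OF B1[of c n], where f="Zp q (s@[x])" and S=T] H by simp
    then show ?thesis
      by (rule has_sum_cong[THEN iffD1, rotated]) (auto simp: Zp_snoc Dc_def n_def)
  qed
  have O: "((\<lambda>k. Gt q (word s) k * u q k ^ x) has_sum T) {c<..}"
  proof (rule has_sum_SigmaD[OF JH])
    fix k :: nat assume "k \<in> {c<..}"
    show "((\<lambda>ks. (\<lambda>(k,ks). Zp q s ks * u q k ^ x) (k, ks)) has_sum Gt q (word s) k * u q k ^ x) (Dc k n)"
      using has_sum_cmult_left[OF IH[of k]] by (simp add: n_def)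
  qed
  show "((\<lambda>a. Gt q (word s) (c+a) * u q (c+a) ^ x) has_sum infsum (Zp q (s@[x])) (Dc c (Suc (length s)))) {1..}"
    using has_sum_reindex_bij_betw[OF bij_shift[of c], where f="\<lambda>k. Gt q (word s) k * u q k ^ x" and S=T] O
    by (simp add: T_def n_def)
qed

lemma slice_banach:
  fixes f :: "'x \<Rightarrow> 'y \<Rightarrow> 'b::banach"
  assumes S: "(\<lambda>(x,y). f x y) summable_on Sigma A B" and x: "x \<in> A"
  shows "f x summable_on B x"
proof -
  have "(\<lambda>(x,y). f x y) summable_on Sigma {x} B"
    by (rule summable_on_subset_banach[OF S]) (use x in auto)
  moreover have "Sigma {x} B = Pair x ` B x" by auto
  ultimately have "(\<lambda>(x,y). f x y) summable_on (Pair x ` B x)" by simp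
  then have "((\<lambda>(x,y). f x y) \<circ> Pair x) summable_on B x"
    by (subst (asm) summable_on_reindex) (auto simp: inj_on_def)
  then show ?thesis by (simp add: comp_def)
qed

lemma Ginner:
  fixes q :: "'a::{real_normed_field,banach}"
  assumes q: "norm q < 1" and k: "1 \<le> k" and Gs: "Gterm q k summable_on Cfg w"
    and slice: "(\<lambda>(zw,yn). Gterm q k zw * q ^ (k * sum_list yn)) summable_on (Cfg w \<times> Pos x)"
  shows "((\<lambda>(zw,yn). Gterm q k zw * q ^ (k * sum_list yn)) has_sum Gt q w k * u q k ^ x) (Cfg w \<times> Pos x)"
proof (rule has_sum_SigmaI)
  fix zw assume "zw \<in> Cfg w"
  show "((\<lambda>yn. (\<lambda>(zw,yn). Gterm q k zw * q ^ (k * sum_list yn)) (zw, yn)) has_sum Gterm q k zw * u q k ^ x) (Pos x)"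
    using has_sum_cmult_right[OF Exp[OF q k, of x], of "Gterm q k zw"] by simp
next
  show "((\<lambda>zw. Gterm q k zw * u q k ^ x) has_sum Gt q w k * u q k ^ x) (Cfg w)"
    unfolding Gt_def by (rule has_sum_cmult_left) (use Gs in simp)
next
  show "(\<lambda>(zw,yn). Gterm q k zw * q ^ (k * sum_list yn)) summable_on Sigma (Cfg w) (\<lambda>_. Pos x)"
    using slice by simp
qed

lemma Mstep:
  fixes q :: "'a::{real_normed_field,banach}"
  assumes q: "norm q < 1"
    and IH1: "\<And>k. (Zp q s has_sum Gt q (word s) k) (Dc k (length s))"
    and IH2: "\<And>k. Gterm q k summable_on Cfg (word s)"
    and P: "1 \<le> hd (s @ [x])"
    and GS: "(\<lambda>(a,zw,yn). Gterm q (c+a) zw * q ^ ((c+a) * sum_list yn)) summable_on ({1..} \<times> (Cfg (word s) \<times> Pos x))"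
  shows "(Zp q (s@[x]) has_sum Gt q (word (s@[x])) c) (Dc c (length (s@[x])))"
    and "Gterm q c summable_on Cfg (word (s@[x]))"
proof -
  define w where "w = word s"
  define T where "T = infsum (Zp q (s@[x])) (Dc c (Suc (length s)))"
  note Z = Zside[OF q IH1 P, of c]
  have O: "((\<lambda>a. Gt q w (c+a) * u q (c+a) ^ x) has_sum T) {1..}"
    using Z(1) by (simp add: T_def w_def)
  have J: "((\<lambda>(a,zw,yn). Gterm q (c+a) zw * q ^ ((c+a) * sum_list yn)) has_sum T) (Sigma {1..} (\<lambda>_. Cfg w \<times> Pos x))"
  proof (rule has_sum_SigmaI[OF _ O])
    fix a :: nat assume a: "a \<in> {1..}"
    have sl: "(\<lambda>(zw,yn). Gterm q (c+a) zw * q ^ ((c+a) * sum_list yn)) summable_on (Cfg w \<times> Pos x)"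
      using slice_banach[OF GS[unfolded w_def[symmetric]] a] by simp
    show "((\<lambda>p. (\<lambda>(a,zw,yn). Gterm q (c+a) zw * q ^ ((c+a) * sum_list yn)) (a, p)) has_sum Gt q w (c+a) * u q (c+a) ^ x) (Cfg w \<times> Pos x)"
      using Ginner[OF q _ IH2 sl[unfolded w_def]] a by (simp add: w_def)
  next
    show "(\<lambda>(a,zw,yn). Gterm q (c+a) zw * q ^ ((c+a) * sum_list yn)) summable_on Sigma {1..} (\<lambda>_. Cfg w \<times> Pos x)"
      using GS by (simp add: w_def)
  qed
  have G: "(Gterm q c has_sum T) (Cfg (w @ replicate x False @ [True]))"
  proof -
    have "((\<lambda>p. Gterm q c ((\<lambda>(a,(zw,yn)). zw @ map (Pair False) yn @ [(True,a)]) p)) has_sum T) ({1..} \<times> (Cfg w \<times> Pos x))"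
      using J by (rule has_sum_cong[THEN iffD1, rotated]) (auto simp: Gterm_split)
    then show ?thesis using has_sum_reindex_bij_betw[OF B2[of w x], where f="Gterm q c" and S=T] by simp
  qed
  then show "Gterm q c summable_on Cfg (word (s@[x]))" using has_sum_imp_summable by (simp add: w_def) blast
  have "Gt q (word (s@[x])) c = T" using G by (simp add: Gt_def w_def infsumI)
  then show "(Zp q (s@[x]) has_sum Gt q (word (s@[x])) c) (Dc c (length (s@[x])))"
    using Z(2) by (simp add: T_def)
qed

lemma M_gen:
  fixes q :: "'a::{real_normed_field,banach}"
  assumes q: "norm q < 1"
    and GSh: "\<And>s x c. 1 \<le> hd (s @ [x]) \<Longrightarrow>
       (\<forall>k. (Zp q s has_sum Gt q (word s) k) (Dc k (length s)) \<and> Gterm q k summable_on Cfg (word s)) \<Longrightarrow>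
       (\<lambda>(a,zw,yn). Gterm q (c+a) zw * q ^ ((c+a) * sum_list yn)) summable_on ({1..} \<times> (Cfg (word s) \<times> Pos x))"
  shows "s = [] \<or> 1 \<le> hd s \<Longrightarrow> (Zp q s has_sum Gt q (word s) c) (Dc c (length s)) \<and> Gterm q c summable_on Cfg (word s)"
proof (induction s arbitrary: c rule: rev_induct)
  case Nil
  have d: "Dc c 0 = {[]}" by (auto simp: Dc_def)
  have cf: "Cfg [] = {[]}" by (auto simp: Cfg_def)
  have "Gt q [] c = 1" by (simp add: Gt_def cf Gterm_def)
  then show ?case by (simp add: d cf word_def Zp_def has_sum_finiteI)
next
  case (snoc x xs)
  have P: "1 \<le> hd (xs @ [x])" using snoc.prems by simp
  have Pxs: "xs = [] \<or> 1 \<le> hd xs" using P by (cases xs) auto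
  have IH: "\<forall>k. (Zp q xs has_sum Gt q (word xs) k) (Dc k (length xs)) \<and> Gterm q k summable_on Cfg (word xs)"
    using snoc.IH[OF Pxs] by blast
  show ?case
    using Mstep[OF q _ _ P GSh[OF P IH, of c]] IH by blast
qed

lemma Gterm_nonneg: "0 \<le> (r::real) \<Longrightarrow> 0 \<le> Gterm r k z" by (simp add: Gterm_def)

lemma u_nonneg: "0 \<le> (r::real) \<Longrightarrow> r < 1 \<Longrightarrow> 0 \<le> u r k"
proof -
  assume "0 \<le> r" "r < 1"
  then have "r ^ k \<le> 1" by (simp add: power_le_one)
  then show ?thesis using \<open>0 \<le> r\<close> by (simp add: u_def)
qed

lemma M_real:
  fixes r :: real
  assumes r: "0 \<le> r" "r < 1"
  shows "s = [] \<or> 1 \<le> hd s \<Longrightarrow> (Zp r s has_sum Gt r (word s) c) (Dc c (length s)) \<and> Gterm r c summable_on Cfg (word s)"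
proof (rule M_gen)
  show q: "norm r < 1" using r by simp
  fix s x c
  assume P: "1 \<le> hd (s @ [x])"
    and IH: "\<forall>k. (Zp r s has_sum Gt r (word s) k) (Dc k (length s)) \<and> Gterm r k summable_on Cfg (word s)"
  define w where "w = word s"
  show "(\<lambda>(a,zw,yn). Gterm r (c+a) zw * r ^ ((c+a) * sum_list yn)) summable_on ({1..} \<times> (Cfg (word s) \<times> Pos x))"
    unfolding w_def[symmetric]
  proof (rule summable_on_SigmaI)
    fix a :: nat assume a: "a \<in> {1..}"
    have k: "1 \<le> c + a" using a by simp
    have Gs: "Gterm r (c+a) summable_on Cfg w" using IH by (simp add: w_def)
    have sl: "(\<lambda>(zw,yn). Gterm r (c+a) zw * r ^ ((c+a) * sum_list yn)) summable_on (Cfg w \<times> Pos x)"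
    proof (rule summable_on_SigmaI)
      fix zw assume "zw \<in> Cfg w"
      show "((\<lambda>yn. (\<lambda>(zw,yn). Gterm r (c+a) zw * r ^ ((c+a) * sum_list yn)) (zw, yn)) has_sum Gterm r (c+a) zw * u r (c+a) ^ x) (Pos x)"
        using has_sum_cmult_right[OF Exp[OF q k, of x], of "Gterm r (c+a) zw"] by simp
    next
      show "(\<lambda>zw. Gterm r (c+a) zw * u r (c+a) ^ x) summable_on Cfg w"
        by (rule summable_on_cmult_left[OF Gs])
    next
      fix zw yn show "0 \<le> (\<lambda>(zw,yn). Gterm r (c+a) zw * r ^ ((c+a) * sum_list yn)) (zw, yn)"
        using r by (simp add: Gterm_nonneg)
    qed
    show "((\<lambda>p. (\<lambda>(a,zw,yn). Gterm r (c+a) zw * r ^ ((c+a) * sum_list yn)) (a, p)) has_sum Gt r w (c+a) * u r (c+a) ^ x) (Cfg w \<times> Pos x)"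
      using Ginner[OF q k Gs sl] by simp
  next
    have "((\<lambda>a. Gt r (word s) (c+a) * u r (c+a) ^ x) has_sum infsum (Zp r (s@[x])) (Dc c (Suc (length s)))) {1..}"
      by (rule Zside(1)[OF q _ P]) (use IH in blast)
    then show "(\<lambda>a. Gt r w (c+a) * u r (c+a) ^ x) summable_on {1..}"
      using has_sum_imp_summable by (simp add: w_def) blast
  next
    fix a p show "0 \<le> (\<lambda>(a,zw,yn). Gterm r (c+a) zw * r ^ ((c+a) * sum_list yn)) (a, p)"
      using r by (auto simp: Gterm_nonneg split: prod.splits)
  qed
qed

lemma norm_Gterm: "norm (Gterm q k z) = Gterm (norm q) k z"
  by (simp add: Gterm_def norm_power)

lemma M:
  fixes q :: "'a::{real_normed_field,banach}"
  assumes q: "norm q < 1"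
  shows "s = [] \<or> 1 \<le> hd s \<Longrightarrow> (Zp q s has_sum Gt q (word s) c) (Dc c (length s)) \<and> Gterm q c summable_on Cfg (word s)"
proof (rule M_gen[OF q])
  fix s :: "nat list" and x c :: nat
  assume P: "1 \<le> hd (s @ [x])"
  have "Gterm (norm q) c summable_on Cfg (word (s @ [x]))"
    using M_real[of "norm q" "s @ [x]" c] q P by auto
  then have "Gterm (norm q) c summable_on Cfg (word s @ replicate x False @ [True])" by simp
  then have "(\<lambda>p. Gterm (norm q) c ((\<lambda>(a,(zw,yn)). zw @ map (Pair False) yn @ [(True,a)]) p)) summable_on ({1..} \<times> (Cfg (word s) \<times> Pos x))"
    using summable_on_reindex_bij_betw[OF B2[of "word s" x], where f="Gterm (norm q) c"] by simp
  then have "(\<lambda>p. norm ((\<lambda>(a,zw,yn). Gterm q (c+a) zw * q ^ ((c+a) * sum_list yn)) p)) summable_on ({1..} \<times> (Cfg (word s) \<times> Pos x))"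
    by (rule summable_on_cong[THEN iffD1, rotated])
       (auto simp: Gterm_split norm_Gterm norm_mult norm_power)
  then show "(\<lambda>(a,zw,yn). Gterm q (c+a) zw * q ^ ((c+a) * sum_list yn)) summable_on ({1..} \<times> (Cfg (word s) \<times> Pos x))"
    by (rule abs_summable_summable)
qed

definition sw :: "bool \<times> nat \<Rightarrow> bool \<times> nat" where "sw p = (\<not> fst p, snd p)"

lemma sw_simp[simp]: "sw (b,v) = (\<not> b, v)" by (simp add: sw_def)
lemma SAp_rev[simp]: "SAp (rev z) = SAp z" by (induction z) auto
lemma SNp_rev[simp]: "SNp (rev z) = SNp z" by (induction z) auto
lemma SNp_sw[simp]: "SNp (map sw z) = SAp z" by (induction z) auto
lemma SAp_sw[simp]: "SAp (map sw z) = SNp z" by (induction z) auto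

lemma Ep_dual: "Ep (rev (map sw z)) = Ep z"
proof (induction z)
  case Nil then show ?case by simp
next
  case (Cons p z)
  obtain b v where p: "p = (b,v)" by (cases p)
  show ?case using Cons by (simp add: Ep_append p)
qed

lemma Cfg_dual: "bij_betw (\<lambda>z. rev (map sw z)) (Cfg w) (Cfg (map Not (rev w)))"
proof (rule bij_betwI[where g="\<lambda>z. rev (map sw z)"])
  show "(\<lambda>z. rev (map sw z)) \<in> Cfg w \<rightarrow> Cfg (map Not (rev w))"
    by (auto simp: Cfg_def sw_def rev_map[symmetric] comp_def)
  show "(\<lambda>z. rev (map sw z)) \<in> Cfg (map Not (rev w)) \<rightarrow> Cfg w"
  proof
    fix z assume "z \<in> Cfg (map Not (rev w))"
    then have "map fst z = map Not (rev w)" "\<forall>p\<in>set z. 0 < snd p" by (auto simp: Cfg_def)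
    then have "map Not (map fst z) = rev w" by (simp add: comp_def)
    then have "map fst (rev (map sw z)) = w" by (simp add: sw_def rev_map comp_def)
       (metis rev_map rev_rev_ident)
    then show "rev (map sw z) \<in> Cfg w" using \<open>\<forall>p\<in>set z. 0 < snd p\<close> by (auto simp: Cfg_def sw_def)
  qed
qed (auto simp: rev_map[symmetric] comp_def sw_def)

lemma Gt_dual: "Gt q w 0 = Gt q (map Not (rev w)) 0"
proof -
  have "Gt q (map Not (rev w)) 0 = infsum (\<lambda>z. Gterm q 0 (rev (map sw z))) (Cfg w)"
    unfolding Gt_def by (rule infsum_reindex_bij_betw[OF Cfg_dual, symmetric])
  also have "\<dots> = Gt q w 0" unfolding Gt_def Gterm_def by (simp add: Ep_dual)
  finally show ?thesis by simp
qed

definition Zv :: "complex \<Rightarrow> nat list \<Rightarrow> complex" where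
  "Zv q s = infsum (Zp q s) (Dc 0 (length s))"

lemma qz_eq_Zv: "qzeta q s s = Zv q s"
  unfolding qzeta_def Zv_def Dc_def Zp_def u_def
  by (rule infsum_cong) (simp add: power_divide power_mult)

lemma u_eq: "1 - q ^ k \<noteq> 0 \<Longrightarrow> q ^ (k * i) / (1 - q ^ k) ^ Suc i = u q k ^ i + u q k ^ Suc i"
proof -
  assume h: "1 - q ^ k \<noteq> 0"
  have e1: "u q k ^ i = q ^ (k * i) / (1 - q ^ k) ^ i" by (simp add: u_def power_divide power_mult)
  have e2: "1 + u q k = 1 / (1 - q ^ k)" using h by (simp add: u_def field_simps)
  have "u q k ^ i + u q k ^ Suc i = u q k ^ i * (1 + u q k)" by (simp add: algebra_simps)
  also have "\<dots> = q ^ (k * i) / (1 - q ^ k) ^ i * (1 / (1 - q ^ k))" by (simp only: e1 e2)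
  also have "\<dots> = q ^ (k * i) / (1 - q ^ k) ^ Suc i" using h by (simp add: field_simps)
  finally show ?thesis by simp
qed

lemma qz_j:
  assumes q: "norm q < 1" and j: "2 \<le> j"
  shows "qzeta q ((j-1)#r) (j#r) = Zv q ((j-1)#r) + Zv q (j#r)"
proof -
  obtain i where i: "j = Suc i" "1 \<le> i" using j by (cases j) auto
  have "qzeta q ((j-1)#r) (j#r) = infsum (\<lambda>ks. Zp q ((j-1)#r) ks + Zp q (j#r) ks) (Dc 0 (length (j # r)))"
    unfolding qzeta_def Dc_def[of 0, symmetric, simplified]
  proof (rule infsum_cong)
    fix ks assume ks: "ks \<in> Dc 0 (length (j # r))"
    then obtain k ks' where kk: "ks = k # ks'" "0 < k" by (cases ks) (auto simp: Dc_def)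
    have nz: "1 - q ^ k \<noteq> 0"
    proof
      assume "1 - q ^ k = 0"
      then have "q ^ k = 1" by simp
      then have "norm (q ^ k) = 1" by simp
      moreover have "norm (q ^ k) < 1" using q kk by (simp add: norm_power power_less_one_iff)
      ultimately show False by simp
    qed
    show "(\<Prod>ja<length (j # r). q ^ (ks ! ja * ((j - 1) # r) ! ja) / (1 - q ^ ks ! ja) ^ (j # r) ! ja)
        = Zp q ((j-1)#r) ks + Zp q (j#r) ks"
      unfolding Zp_def length_Cons prod.lessThan_Suc_shift
      using u_eq[OF nz, of i] by (simp add: kk i algebra_simps u_def power_divide power_mult)
  qed
  also have "\<dots> = infsum (Zp q ((j-1)#r)) (Dc 0 (length (j # r))) + infsum (Zp q (j#r)) (Dc 0 (length (j # r)))"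
  proof (rule infsum_add)
    show "Zp q ((j-1)#r) summable_on Dc 0 (length (j # r))"
      using M[OF q, of "(j-1)#r" 0] i has_sum_imp_summable by auto
    show "Zp q (j#r) summable_on Dc 0 (length (j # r))"
      using M[OF q, of "j#r" 0] i has_sum_imp_summable by auto
  qed
  also have "\<dots> = Zv q ((j-1)#r) + Zv q (j#r)" by (simp add: Zv_def)
  finally show ?thesis .
qed

lemma tele:
  fixes Z :: "nat \<Rightarrow> 'a::comm_ring_1"
  shows "1 \<le> n \<Longrightarrow> (\<Sum>j\<in>{2..n}. (-1)^j * (Z (j-1) + Z j)) = Z 1 + (-1)^n * Z n"
proof (induction n rule: dec_induct)
  case base then show ?case by simp
next
  case (step n)
  have "{2..Suc n} = insert (Suc n) {2..n}" using step by auto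
  then show ?case using step by (simp add: algebra_simps)
qed

lemma Psi_Zv:
  assumes q: "norm q < 1" and a: "1 \<le> \<alpha>"
  shows "Psi q \<alpha> r = Zv q (\<alpha> # r)"
proof -
  have "(\<Sum>j\<in>{2..\<alpha>}. (-1)^j * qzeta q ((j-1)#r) (j#r)) = (\<Sum>j\<in>{2..\<alpha>}. (-1)^j * (Zv q ((j-1)#r) + Zv q (j#r)))"
  proof (rule sum.cong)
    fix j assume "j \<in> {2..\<alpha>}"
    then show "(-1)^j * qzeta q ((j-1)#r) (j#r) = (-1)^j * (Zv q ((j-1)#r) + Zv q (j#r))"
      using qz_j[OF q, of j r] by simp
  qed simp
  also have "\<dots> = Zv q (1#r) + (-1)^\<alpha> * Zv q (\<alpha>#r)"
    using tele[OF a, of "\<lambda>j. Zv q (j#r)"] by simp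
  finally have "Psi q \<alpha> r = (-1)^\<alpha> * ((-1)^\<alpha> * Zv q (\<alpha>#r))"
    by (simp add: Psi_def qz_eq_Zv)
  also have "\<dots> = Zv q (\<alpha>#r)" by (simp add: mult.assoc[symmetric] power_mult_distrib[symmetric])
  finally show ?thesis .
qed

lemma word_append[simp]: "word (s1 @ s2) = word s1 @ word s2" by (simp add: word_def)
lemma word_Cons[simp]: "word (x # s) = replicate x False @ True # word s" by (simp add: word_def)
lemma word_Nil[simp]: "word [] = []" by (simp add: word_def)
lemma word_rep0[simp]: "word (replicate n 0) = replicate n True" by (induction n) auto
lemma word_blk: "1 \<le> y \<Longrightarrow> word (x # replicate (y-1) 0) = replicate x False @ replicate y True"
  by (cases y) auto
lemma word_concat: "word (concat (map f xs)) = concat (map (\<lambda>j. word (f j)) xs)"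
  by (induction xs) auto

lemma dual_concat:
  "map Not (rev (concat (map (\<lambda>j. replicate (A j) False @ replicate (B j) True) xs)))
   = concat (map (\<lambda>j. replicate (B j) False @ replicate (A j) True) (rev xs))"
  by (induction xs) auto

lemma Psi_Gt:
  assumes q: "norm q < 1" and a: "1 \<le> \<alpha>"
  shows "Psi q \<alpha> r = Gt q (word (\<alpha> # r)) 0"
proof -
  have "(Zp q (\<alpha> # r) has_sum Gt q (word (\<alpha> # r)) 0) (Dc 0 (length (\<alpha> # r)))"
    using M[OF q, of "\<alpha> # r" 0] a by simp
  then show ?thesis using Psi_Zv[OF q a] by (simp add: Zv_def infsumI)
qed

theorem theorem8p5:
  fixes q :: complex and l :: nat and a b :: "nat \<Rightarrow> nat"
  assumes "norm q < 1"
    and "1 \<le> l"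
    and "\<forall>j\<in>{1..l}. 1 \<le> a j \<and> 1 \<le> b j"
  shows "Psi q (a 1)
           (replicate (b 1 - 1) 0 @ concat (map (\<lambda>j. a j # replicate (b j - 1) 0) [2..<Suc l]))
       = Psi q (b l)
           (replicate (a l - 1) 0 @ concat (map (\<lambda>j. b j # replicate (a j - 1) 0) (rev [1..<l])))"
proof -
  note q = assms(1) and l = assms(2) and ab = assms(3)
  define blk where "blk j = replicate (a j) False @ replicate (b j) True" for j
  define blk' where "blk' j = replicate (b j) False @ replicate (a j) True" for j
  have a1: "1 \<le> a 1" and b1: "1 \<le> b 1" using ab l by auto
  have al: "1 \<le> a l" and bl: "1 \<le> b l" using ab l by auto
  have wL: "word (a 1 # replicate (b 1 - 1) 0 @ concat (map (\<lambda>j. a j # replicate (b j - 1) 0) [2..<Suc l]))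
      = concat (map blk [1..<Suc l])"
  proof -
    have "word (a 1 # replicate (b 1 - 1) 0 @ concat (map (\<lambda>j. a j # replicate (b j - 1) 0) [2..<Suc l]))
       = word (a 1 # replicate (b 1 - 1) 0) @ concat (map (\<lambda>j. word (a j # replicate (b j - 1) 0)) [2..<Suc l])"
      by (simp only: append_Cons[symmetric] word_append word_concat)
    also have "\<dots> = blk 1 @ concat (map blk [2..<Suc l])"
    proof -
      have "map (\<lambda>j. word (a j # replicate (b j - 1) 0)) [2..<Suc l] = map blk [2..<Suc l]"
      proof (rule map_cong)
        fix j assume "j \<in> set [2..<Suc l]"
        then have "1 \<le> b j" using ab by auto
        then show "word (a j # replicate (b j - 1) 0) = blk j" by (simp only: word_blk blk_def)
      qed simp
      moreover have "word (a 1 # replicate (b 1 - 1) 0) = blk 1" using b1 by (simp only: word_blk blk_def)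
      ultimately show ?thesis by (simp only:)
    qed
    also have "\<dots> = concat (map blk [1..<Suc l])"
    proof -
      have "[1..<Suc l] = 1 # [Suc 1..<Suc l]" using l by (intro upt_conv_Cons) simp
      then have "[1..<Suc l] = 1 # [2..<Suc l]" by (simp only: Suc_1)
      then show ?thesis by (simp only: list.map concat.simps)
    qed
    finally show ?thesis .
  qed
  have wR: "word (b l # replicate (a l - 1) 0 @ concat (map (\<lambda>j. b j # replicate (a j - 1) 0) (rev [1..<l])))
      = concat (map blk' (rev [1..<Suc l]))"
  proof -
    have "word (b l # replicate (a l - 1) 0 @ concat (map (\<lambda>j. b j # replicate (a j - 1) 0) (rev [1..<l])))
       = word (b l # replicate (a l - 1) 0) @ concat (map (\<lambda>j. word (b j # replicate (a j - 1) 0)) (rev [1..<l]))"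
      by (simp only: append_Cons[symmetric] word_append word_concat)
    also have "\<dots> = blk' l @ concat (map blk' (rev [1..<l]))"
    proof -
      have "map (\<lambda>j. word (b j # replicate (a j - 1) 0)) (rev [1..<l]) = map blk' (rev [1..<l])"
      proof (rule map_cong)
        fix j assume "j \<in> set (rev [1..<l])"
        then have "1 \<le> a j" using ab by auto
        then show "word (b j # replicate (a j - 1) 0) = blk' j" by (simp only: word_blk blk'_def)
      qed simp
      moreover have "word (b l # replicate (a l - 1) 0) = blk' l" using al by (simp only: word_blk blk'_def)
      ultimately show ?thesis by (simp only:)
    qed
    also have "\<dots> = concat (map blk' (rev [1..<Suc l]))" using l by simp
    finally show ?thesis .
  qed
  have "Psi q (a 1) (replicate (b 1 - 1) 0 @ concat (map (\<lambda>j. a j # replicate (b j - 1) 0) [2..<Suc l]))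
      = Gt q (concat (map blk [1..<Suc l])) 0"
    using Psi_Gt[OF q a1] wL by simp
  also have "\<dots> = Gt q (map Not (rev (concat (map blk [1..<Suc l])))) 0" by (rule Gt_dual)
  also have "map Not (rev (concat (map blk [1..<Suc l]))) = concat (map blk' (rev [1..<Suc l]))"
    unfolding blk_def blk'_def by (rule dual_concat)
  also have "Gt q (concat (map blk' (rev [1..<Suc l]))) 0
      = Psi q (b l) (replicate (a l - 1) 0 @ concat (map (\<lambda>j. b j # replicate (a j - 1) 0) (rev [1..<l])))"
    using Psi_Gt[OF q bl] wR by simp
  finally show ?thesis .
qed

end
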